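(* Let $G\sim G(n,m)$ and fix $\delta\in(0,1)$; assume $1\le m\le(1-\delta)N$. Let $\mu=2m/n$ and let $\lambda=\lambda_n$ be real with $\lambda_n\to0$. Then, as $n\to\infty$, $$\sup_{k}\left|\frac{\mathbb E[e^{\lambda(d_1-\mu)}\mid d_2=k]}{\mathbb E[e^{\lambda(d_1-\mu)}]}-1\right|\to0,$$ where the supremum is over all $k\in\{0,1,\dots,n-1\}$ with $\mathbb P(d_2=k)>0$.
   Context: $N=\binom n2$; $G(n,m)$ is the uniform distribution over graphs on $[n]$ with exactly $m$ edges, $m=m(n)$. $d_i$ denotes the degree of vertex $i$. *)

theory Defs
  imports "HOL-Probability.Probability"
begin

text \<open>Vertex set [n] = {1..n}. A simple graph is a set of edges, each edge a 2-subset of [n].\<close>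

definition all_edges :: "nat \<Rightarrow> nat set set" where
  "all_edges n = {e. e \<subseteq> {1..n} \<and> card e = 2}"

definition NN :: "nat \<Rightarrow> nat" where
  "NN n = n choose 2"

definition graphs_nm :: "nat \<Rightarrow> nat \<Rightarrow> nat set set set" where
  "graphs_nm n m = {E. E \<subseteq> all_edges n \<and> card E = m}"

definition Gnm :: "nat \<Rightarrow> nat \<Rightarrow> nat set set pmf" where
  "Gnm n m = pmf_of_set (graphs_nm n m)"

definition deg :: "nat set set \<Rightarrow> nat \<Rightarrow> nat" where
  "deg E i = card {e \<in> E. i \<in> e}"

end

theory Submission
  imports Defs
begin

definition subs :: "'a set \<Rightarrow> nat \<Rightarrow> 'a set set" where
  "subs W j = {B. B \<subseteq> W \<and> card B = j}"

definition ssum :: "real \<Rightarrow> 'a set \<Rightarrow> 'a set \<Rightarrow> nat \<Rightarrow> real" where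
  "ssum x W P j = (\<Sum>B\<in>subs W j. x ^ card (B \<inter> P))"

lemma finite_subs: "finite W \<Longrightarrow> finite (subs W j)"
  unfolding subs_def by (rule finite_subset[of _ "Pow W"]) auto

lemma inner_sum:
  assumes "finite W" "B \<subseteq> W" "card B = j"
  shows "(\<Sum>e\<in>W - B. x ^ card (insert e B \<inter> P)) =
         x ^ card (B \<inter> P) * (real (card W - j) + (x - 1) * real (card ((W - B) \<inter> P)))"
proof -
  have fB: "finite B" by (rule finite_subset[OF assms(2,1)])
  have split: "(\<Sum>e\<in>W - B. x ^ card (insert e B \<inter> P)) =
     (\<Sum>e\<in>(W - B) \<inter> P. x ^ card (insert e B \<inter> P)) + (\<Sum>e\<in>(W - B) - P. x ^ card (insert e B \<inter> P))"
  proof -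
    have "(\<Sum>e\<in>W - B. x ^ card (insert e B \<inter> P)) = (\<Sum>e\<in>((W - B) \<inter> P) \<union> ((W - B) - P). x ^ card (insert e B \<inter> P))"
      by (rule sum.cong) auto
    also have "\<dots> = (\<Sum>e\<in>(W - B) \<inter> P. x ^ card (insert e B \<inter> P)) + (\<Sum>e\<in>(W - B) - P. x ^ card (insert e B \<inter> P))"
      by (rule sum.union_disjoint) (use assms(1) in auto)
    finally show ?thesis .
  qed
  have a: "(\<Sum>e\<in>(W - B) \<inter> P. x ^ card (insert e B \<inter> P)) = real (card ((W - B) \<inter> P)) * x ^ Suc (card (B \<inter> P))"
  proof -
    have "\<And>e. e \<in> (W - B) \<inter> P \<Longrightarrow> card (insert e B \<inter> P) = Suc (card (B \<inter> P))"
    proof -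
      fix e assume e: "e \<in> (W - B) \<inter> P"
      hence "insert e B \<inter> P = insert e (B \<inter> P)" by auto
      thus "card (insert e B \<inter> P) = Suc (card (B \<inter> P))" using e fB by simp
    qed
    thus ?thesis by simp
  qed
  have b: "(\<Sum>e\<in>(W - B) - P. x ^ card (insert e B \<inter> P)) = real (card ((W - B) - P)) * x ^ (card (B \<inter> P))"
  proof -
    have "\<And>e. e \<in> (W - B) - P \<Longrightarrow> insert e B \<inter> P = B \<inter> P" by auto
    thus ?thesis by simp
  qed
  have c: "card ((W - B) - P) + card ((W - B) \<inter> P) = card W - j"
  proof -
    have "card (W - B) = card (((W - B) \<inter> P) \<union> ((W - B) - P))" by (rule arg_cong[where f=card]) auto
    also have "\<dots> = card ((W - B) \<inter> P) + card ((W - B) - P)"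
      by (rule card_Un_disjoint) (use assms(1) in auto)
    finally have "card (W - B) = card ((W - B) \<inter> P) + card ((W - B) - P)" .
    moreover have "card (W - B) = card W - card B" using assms(2) fB by (simp add: card_Diff_subset)
    ultimately show ?thesis using assms(3) by simp
  qed
  have c': "real (card ((W - B) - P)) = real (card W - j) - real (card ((W - B) \<inter> P))"
    using c by linarith
  have "(\<Sum>e\<in>W - B. x ^ card (insert e B \<inter> P)) = real (card ((W - B) \<inter> P)) * x ^ Suc (card (B \<inter> P)) + (real (card W - j) - real (card ((W - B) \<inter> P))) * x ^ (card (B \<inter> P))"
    using split a b c' by simp
  thus ?thesis by (simp add: algebra_simps)
qed

lemma ssum_rec:
  assumes "finite W"
  shows "real (Suc j) * ssum x W P (Suc j) =
    (\<Sum>B\<in>subs W j. x ^ card (B \<inter> P) * (real (card W - j) + (x - 1) * real (card ((W - B) \<inter> P))))"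
proof -
  have "real (Suc j) * ssum x W P (Suc j) = (\<Sum>B\<in>subs W (Suc j). \<Sum>e\<in>B. x ^ card (B \<inter> P))"
  proof -
    have "real (Suc j) * ssum x W P (Suc j) = (\<Sum>B\<in>subs W (Suc j). real (card B) * x ^ card (B \<inter> P))"
      unfolding ssum_def sum_distrib_left by (intro sum.cong refl) (simp add: subs_def)
    also have "\<dots> = (\<Sum>B\<in>subs W (Suc j). \<Sum>e\<in>B. x ^ card (B \<inter> P))"
      by (intro sum.cong refl) simp
    finally show ?thesis .
  qed
  also have "\<dots> = (\<Sum>(B,e)\<in>Sigma (subs W (Suc j)) (\<lambda>B. B). x ^ card (B \<inter> P))"
  proof (rule sum.Sigma)
    show "finite (subs W (Suc j))" using finite_subs[OF assms] .
    show "\<forall>B\<in>subs W (Suc j). finite B"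
    proof
      fix B assume "B \<in> subs W (Suc j)"
      hence "B \<subseteq> W" by (simp add: subs_def)
      thus "finite B" using assms by (rule finite_subset)
    qed
  qed
  also have "\<dots> = (\<Sum>(B,e)\<in>Sigma (subs W j) (\<lambda>B. W - B). x ^ card (insert e B \<inter> P))"
  proof (rule sum.reindex_bij_witness[where i = "\<lambda>(B,e). (insert e B, e)" and j = "\<lambda>(B,e). (B - {e}, e)"])
    fix a assume "a \<in> Sigma (subs W (Suc j)) (\<lambda>B. B)"
    then obtain B e where a: "a = (B,e)" "B \<subseteq> W" "card B = Suc j" "e \<in> B" by (auto simp: subs_def)
    have fB: "finite B" by (rule finite_subset[OF a(2) assms])
    show "(case case a of (B, e) \<Rightarrow> (B - {e}, e) of (B, e) \<Rightarrow> (insert e B, e)) = a" using a by auto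
    show "(case a of (B, e) \<Rightarrow> (B - {e}, e)) \<in> Sigma (subs W j) (\<lambda>B. W - B)"
      using a fB unfolding subs_def by (simp add: subset_iff)
    show "(case case a of (B, e) \<Rightarrow> (B - {e}, e) of (B, e) \<Rightarrow> x ^ card (insert e B \<inter> P)) =
        (case a of (B, e) \<Rightarrow> x ^ card (B \<inter> P))" using a by (simp add: insert_absorb)
  next
    fix a assume "a \<in> Sigma (subs W j) (\<lambda>B. W - B)"
    then obtain B e where a: "a = (B,e)" "B \<subseteq> W" "card B = j" "e \<in> W" "e \<notin> B" by (auto simp: subs_def)
    have fB: "finite B" by (rule finite_subset[OF a(2) assms])
    show "(case case a of (B, e) \<Rightarrow> (insert e B, e) of (B, e) \<Rightarrow> (B - {e}, e)) = a" using a by auto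
    show "(case a of (B, e) \<Rightarrow> (insert e B, e)) \<in> Sigma (subs W (Suc j)) (\<lambda>B. B)"
      using a fB by (simp add: subs_def)
  qed
  also have "\<dots> = (\<Sum>B\<in>subs W j. \<Sum>e\<in>W - B. x ^ card (insert e B \<inter> P))"
  proof (rule sum.Sigma[symmetric])
    show "finite (subs W j)" using finite_subs[OF assms] .
    show "\<forall>B\<in>subs W j. finite (W - B)" using assms by simp
  qed
  also have "\<dots> = (\<Sum>B\<in>subs W j. x ^ card (B \<inter> P) * (real (card W - j) + (x - 1) * real (card ((W - B) \<inter> P))))"
    by (intro sum.cong refl inner_sum) (use assms in \<open>simp_all add: subs_def\<close>)
  finally show ?thesis .
qed


lemma ssum_one: "ssum 1 W P j = real (card (subs W j))"
  unfolding ssum_def by simp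

lemma ssum1_rec:
  assumes "finite W"
  shows "real (Suc j) * ssum 1 W P (Suc j) = real (card W - j) * ssum 1 W P j"
  using ssum_rec[OF assms, of j 1 P] by (simp add: ssum_def sum_distrib_left mult.commute)

lemma subs_nonempty: "finite W \<Longrightarrow> j \<le> card W \<Longrightarrow> subs W j \<noteq> {}"
  unfolding subs_def using obtain_subset_with_card_n[of j W] by blast

lemma ssum_pos: "finite W \<Longrightarrow> subs W j \<noteq> {} \<Longrightarrow> x > 0 \<Longrightarrow> ssum x W P j > 0"
  unfolding ssum_def by (intro sum_pos finite_subs) auto

lemma ssum_nonneg: "x > 0 \<Longrightarrow> ssum x W P j \<ge> 0"
  unfolding ssum_def by (intro sum_nonneg) auto

lemma ssum_step_raw:
  assumes "finite W" "x > 0"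
  shows "\<bar>real (Suc j) * ssum x W P (Suc j) - real (card W - j) * ssum x W P j\<bar>
           \<le> \<bar>x - 1\<bar> * real (card (W \<inter> P)) * ssum x W P j"
proof -
  have eq: "real (Suc j) * ssum x W P (Suc j) - real (card W - j) * ssum x W P j
      = (x - 1) * (\<Sum>B\<in>subs W j. x ^ card (B \<inter> P) * real (card ((W - B) \<inter> P)))"
  proof -
    have "real (Suc j) * ssum x W P (Suc j) - real (card W - j) * ssum x W P j
      = (\<Sum>B\<in>subs W j. x ^ card (B \<inter> P) * (real (card W - j) + (x - 1) * real (card ((W - B) \<inter> P))))
        - (\<Sum>B\<in>subs W j. real (card W - j) * x ^ card (B \<inter> P))"
      unfolding ssum_rec[OF assms(1)] by (simp add: ssum_def sum_distrib_left)
    also have "\<dots> = (\<Sum>B\<in>subs W j. x ^ card (B \<inter> P) * (real (card W - j) + (x - 1) * real (card ((W - B) \<inter> P)))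
         - real (card W - j) * x ^ card (B \<inter> P))"
      by (simp add: sum_subtractf)
    also have "\<dots> = (\<Sum>B\<in>subs W j. (x - 1) * (x ^ card (B \<inter> P) * real (card ((W - B) \<inter> P))))"
      by (intro sum.cong refl) (simp add: algebra_simps)
    finally show ?thesis by (simp add: sum_distrib_left)
  qed
  have "\<bar>real (Suc j) * ssum x W P (Suc j) - real (card W - j) * ssum x W P j\<bar> = \<bar>x - 1\<bar> * (\<Sum>B\<in>subs W j. x ^ card (B \<inter> P) * real (card ((W - B) \<inter> P)))"
    unfolding eq using assms(2) by (simp add: abs_mult sum_nonneg)
  also have "\<dots> \<le> \<bar>x - 1\<bar> * (\<Sum>B\<in>subs W j. x ^ card (B \<inter> P) * real (card (W \<inter> P)))"
  proof (rule mult_left_mono[OF sum_mono])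
    fix B assume "B \<in> subs W j"
    have "card ((W - B) \<inter> P) \<le> card (W \<inter> P)"
      by (rule card_mono) (use assms(1) in auto)
    thus "x ^ card (B \<inter> P) * real (card ((W - B) \<inter> P)) \<le> x ^ card (B \<inter> P) * real (card (W \<inter> P))"
      using assms(2) by (intro mult_left_mono) auto
  qed simp
  also have "\<dots> = \<bar>x - 1\<bar> * real (card (W \<inter> P)) * ssum x W P j"
    unfolding ssum_def sum_distrib_left sum_distrib_right by (simp add: mult_ac)
  finally show ?thesis .
qed

lemma frac_step:
  fixes a b c d w s e :: real
  assumes "s * d = w * c" "c > 0" "w > 0" "s > 0" "\<bar>s * a - w * b\<bar> \<le> e * b"
  shows "\<bar>a / d - b / c\<bar> \<le> e / w * (b / c)"
proof -
  have d: "d = w * c / s" using assms(1,4) by (simp add: field_simps)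
  have "a / d - b / c = (s * a - w * b) / (w * c)" unfolding d using assms(2-4) by (simp add: field_simps)
  hence "\<bar>a / d - b / c\<bar> = \<bar>s * a - w * b\<bar> / (w * c)" using assms(2,3) by (simp add: abs_div)
  also have "\<dots> \<le> e * b / (w * c)" using assms(2,3,5) by (intro divide_right_mono) auto
  also have "\<dots> = e / w * (b / c)" by simp
  finally show ?thesis .
qed

definition havg :: "real \<Rightarrow> 'a set \<Rightarrow> 'a set \<Rightarrow> nat \<Rightarrow> real" where
  "havg x W P j = ssum x W P j / ssum 1 W P j"

lemma havg_step:
  assumes "finite W" "x > 0" "j < card W"
  shows "\<bar>havg x W P (Suc j) - havg x W P j\<bar> \<le> \<bar>x - 1\<bar> * real (card (W \<inter> P)) / real (card W - j) * havg x W P j"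
  unfolding havg_def
proof (rule frac_step[where s = "real (Suc j)"])
  show "real (Suc j) * ssum 1 W P (Suc j) = real (card W - j) * ssum 1 W P j" by (rule ssum1_rec[OF assms(1)])
  show "0 < ssum 1 W P j" using assms by (intro ssum_pos subs_nonempty) auto
  show "0 < real (card W - j)" using assms by simp
  show "0 < real (Suc j)" by simp
  show "\<bar>real (Suc j) * ssum x W P (Suc j) - real (card W - j) * ssum x W P j\<bar> \<le> \<bar>x - 1\<bar> * real (card (W \<inter> P)) * ssum x W P j"
    by (rule ssum_step_raw[OF assms(1,2)])
qed

lemma iter_bounds:
  fixes h :: "nat \<Rightarrow> real"
  assumes step: "\<And>i. j \<le> i \<Longrightarrow> i < J \<Longrightarrow> \<bar>h (Suc i) - h i\<bar> \<le> eta * h i"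
    and nn: "\<And>i. h i \<ge> 0" and eta: "0 \<le> eta" "eta \<le> 1"
  shows "j + d \<le> J \<Longrightarrow> (1 - eta) ^ d * h j \<le> h (j + d) \<and> h (j + d) \<le> (1 + eta) ^ d * h j"
proof (induction d)
  case 0 thus ?case by simp
next
  case (Suc d)
  hence IH: "(1 - eta) ^ d * h j \<le> h (j + d)" "h (j + d) \<le> (1 + eta) ^ d * h j" by auto
  have st: "\<bar>h (Suc (j + d)) - h (j + d)\<bar> \<le> eta * h (j + d)" using Suc.prems by (intro step) auto
  have "(1 - eta) ^ Suc d * h j = (1 - eta) * ((1 - eta) ^ d * h j)" by simp
  also have "\<dots> \<le> (1 - eta) * h (j + d)" using IH(1) eta by (intro mult_left_mono) auto
  also have "\<dots> \<le> h (j + Suc d)" using st by (simp add: algebra_simps abs_le_iff)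
  finally have 1: "(1 - eta) ^ Suc d * h j \<le> h (j + Suc d)" .
  have "h (j + Suc d) \<le> (1 + eta) * h (j + d)" using st by (simp add: algebra_simps abs_le_iff)
  also have "\<dots> \<le> (1 + eta) * ((1 + eta) ^ d * h j)" using IH(2) eta by (intro mult_left_mono) auto
  also have "\<dots> = (1 + eta) ^ Suc d * h j" by simp
  finally show ?case using 1 by simp
qed

lemma ratio_bound:
  fixes h :: "nat \<Rightarrow> real"
  assumes step: "\<And>i. i < J \<Longrightarrow> \<bar>h (Suc i) - h i\<bar> \<le> eta * h i"
    and nn: "\<And>i. h i \<ge> 0" and eta: "0 \<le> eta"
    and jj: "j \<le> J" "j' \<le> J" "j \<le> j' + n" "j' \<le> j + n"
    and z: "real n * eta \<le> z" "z < 1"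
  shows "h j \<le> exp z / (1 - z) * h j'"
proof (cases "n = 0")
  case True
  hence "j = j'" using jj by simp
  have z0: "z \<ge> 0" using z True by simp
  have "1 \<le> exp z" using z0 by simp
  also have "exp z \<le> exp z / (1 - z)" using z z0 by (simp add: le_divide_eq)
  finally have "1 * h j \<le> exp z / (1 - z) * h j" using nn by (intro mult_right_mono) auto
  thus ?thesis using \<open>j = j'\<close> by simp
next
  case False
  have npos: "real n \<ge> 1" using False by simp
  have "eta \<le> real n * eta" using npos eta by (simp add: mult_le_cancel_right1)
  hence eta1: "eta \<le> 1" using z by simp
  have z0: "z \<ge> 0" using z eta by (smt (verit) npos mult_nonneg_nonneg)
  show ?thesis
  proof (cases "j' \<le> j")
    case True
    define d where "d = j - j'"
    have jd: "j = j' + d" using True d_def by simp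
    have "h (j' + d) \<le> (1 + eta) ^ d * h j'"
      using iter_bounds[of j' J h eta d] step nn eta eta1 jd jj by auto
    also have "(1 + eta) ^ d \<le> exp eta ^ d"
      using eta by (intro power_mono) (auto simp: add.commute exp_ge_add_one_self)
    also have "exp eta ^ d = exp (real d * eta)" by (simp add: exp_of_nat_mult)
    also have "exp (real d * eta) \<le> exp z"
    proof -
      have "real d \<le> real n" using jd jj by simp
      hence "real d * eta \<le> real n * eta" using eta by (intro mult_right_mono) auto
      thus ?thesis using z by simp
    qed
    also have "exp z \<le> exp z / (1 - z)" using z z0 by (simp add: le_divide_eq)
    finally have "h j \<le> exp z / (1 - z) * h j'" unfolding jd using nn by (simp add: mult_right_mono)
    thus ?thesis .
  next
    case False
    define d where "d = j' - j"
    have jd: "j' = j + d" using False d_def by simp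
    have "(1 - eta) ^ d * h j \<le> h (j + d)"
      using iter_bounds[of j J h eta d] step nn eta eta1 jd jj by auto
    moreover have "1 - z \<le> (1 - eta) ^ d"
    proof -
      have "1 + real d * (- eta) \<le> (1 + (- eta)) ^ d" using eta1 by (intro Bernoulli_inequality) simp
      moreover have "real d \<le> real n" using jd jj by simp
      hence "real d * eta \<le> real n * eta" using eta by (intro mult_right_mono) auto
      ultimately show ?thesis using z by simp
    qed
    ultimately have "(1 - z) * h j \<le> h j'" using nn jd
      by (smt (verit) mult_right_mono)
    hence "h j \<le> h j' / (1 - z)" using z by (simp add: le_divide_eq mult.commute)
    also have "\<dots> \<le> exp z / (1 - z) * h j'"
    proof -
      have "h j' / (1 - z) = 1 / (1 - z) * h j'" by simp
      also have "\<dots> \<le> exp z / (1 - z) * h j'" using z z0 nn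
        by (intro mult_right_mono divide_right_mono) auto
      finally show ?thesis .
    qed
    finally show ?thesis .
  qed
qed

definition gk :: "'a set \<Rightarrow> 'a set \<Rightarrow> nat \<Rightarrow> nat \<Rightarrow> 'a set set" where
  "gk U Q m k = {E. E \<subseteq> U \<and> card E = m \<and> card (E \<inter> Q) = k}"

lemma decomp:
  assumes U: "finite U" and QU: "Q \<subseteq> U" and km: "k \<le> m"
  shows "(\<Sum>E\<in>gk U Q m k. x ^ card (E \<inter> P)) = ssum x Q P k * ssum x (U - Q) P (m - k)"
proof -
  have fQ: "finite Q" using QU U by (rule finite_subset)
  have "ssum x Q P k * ssum x (U - Q) P (m - k) =
      (\<Sum>A\<in>subs Q k. \<Sum>B\<in>subs (U - Q) (m - k). x ^ card (A \<inter> P) * x ^ card (B \<inter> P))"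
    unfolding ssum_def by (rule sum_product)
  also have "\<dots> = (\<Sum>(A,B)\<in>subs Q k \<times> subs (U - Q) (m - k). x ^ card (A \<inter> P) * x ^ card (B \<inter> P))"
    by (rule sum.cartesian_product)
  also have "(\<Sum>E\<in>gk U Q m k. x ^ card (E \<inter> P)) = \<dots>"
  proof (rule sum.reindex_bij_witness[where i = "\<lambda>(A,B). A \<union> B" and j = "\<lambda>E. (E \<inter> Q, E - Q)"])
    fix E assume "E \<in> gk U Q m k"
    hence E: "E \<subseteq> U" "card E = m" "card (E \<inter> Q) = k" by (auto simp: gk_def)
    have fE: "finite E" using E(1) U by (rule finite_subset)
    show "(case (E \<inter> Q, E - Q) of (A, B) \<Rightarrow> A \<union> B) = E" by auto
    have c: "card E = card (E \<inter> Q) + card (E - Q)" using fE by (rule card_Int_Diff)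
    show "(E \<inter> Q, E - Q) \<in> subs Q k \<times> subs (U - Q) (m - k)"
      using E c by (auto simp: subs_def)
    have c2: "card (E \<inter> P) = card (E \<inter> P \<inter> Q) + card (E \<inter> P - Q)"
      using fE by (intro card_Int_Diff) simp
    have e1: "E \<inter> P \<inter> Q = E \<inter> Q \<inter> P" by auto
    have e2: "E \<inter> P - Q = (E - Q) \<inter> P" by auto
    show "(case (E \<inter> Q, E - Q) of (A, B) \<Rightarrow> x ^ card (A \<inter> P) * x ^ card (B \<inter> P)) = x ^ card (E \<inter> P)"
      using c2 unfolding e1 e2 by (simp add: power_add)
  next
    fix AB assume "AB \<in> subs Q k \<times> subs (U - Q) (m - k)"
    then obtain A B where AB: "AB = (A, B)" "A \<subseteq> Q" "card A = k" "B \<subseteq> U - Q" "card B = m - k"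
      by (auto simp: subs_def)
    have fA: "finite A" using AB(2) fQ by (rule finite_subset)
    have fB: "finite B" using AB(4) U by (meson finite_Diff finite_subset)
    have i1: "(A \<union> B) \<inter> Q = A" using AB by auto
    have i2: "(A \<union> B) - Q = B" using AB by auto
    show "(case case AB of (A, B) \<Rightarrow> A \<union> B of E \<Rightarrow> (E \<inter> Q, E - Q)) = AB"
      using AB(1) i1 i2 by simp
    have "card (A \<union> B) = card A + card B"
      using fA fB AB by (intro card_Un_disjoint) auto
    hence "card (A \<union> B) = m" using AB km by simp
    thus "(case AB of (A, B) \<Rightarrow> A \<union> B) \<in> gk U Q m k"
      using AB i1 QU by (auto simp: gk_def)
  qed
  finally show ?thesis by simp
qed

lemma finite_all_edges: "finite (all_edges n)"
  unfolding all_edges_def by (rule finite_subset[of _ "Pow {1..n}"]) auto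

lemma card_all_edges: "card (all_edges n) = NN n"
  unfolding all_edges_def NN_def using n_subsets[of "{1..n}" 2] by simp

lemma star_sub: "{e \<in> all_edges n. v \<in> e} \<subseteq> (\<lambda>i. {v, i}) ` {1..n}"
proof
  fix e assume "e \<in> {e \<in> all_edges n. v \<in> e}"
  hence e: "e \<subseteq> {1..n}" "card e = 2" "v \<in> e" by (auto simp: all_edges_def)
  then obtain a b where ab: "e = {a, b}" "a \<noteq> b" by (auto simp: card_2_iff)
  show "e \<in> (\<lambda>i. {v, i}) ` {1..n}"
  proof (cases "v = a")
    case True
    hence "e = {v, b}" using ab by simp
    moreover have "b \<in> {1..n}" using e(1) ab by auto
    ultimately show ?thesis by blast
  next
    case False
    hence "v = b" using e(3) ab by auto
    hence "e = {v, a}" using ab by auto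
    moreover have "a \<in> {1..n}" using e(1) ab by auto
    ultimately show ?thesis by blast
  qed
qed

lemma card_star: "card {e \<in> all_edges n. v \<in> e} \<le> n"
proof -
  have "card {e \<in> all_edges n. v \<in> e} \<le> card ((\<lambda>i. {v, i}) ` {1..n})"
    by (rule card_mono[OF _ star_sub]) simp
  also have "\<dots> \<le> card {1..n}" by (rule card_image_le) simp
  finally show ?thesis by simp
qed

lemma star_sub': "{e \<in> all_edges n. v \<in> e} \<subseteq> (\<lambda>i. {v, i}) ` ({1..n} - {v})"
proof
  fix e assume "e \<in> {e \<in> all_edges n. v \<in> e}"
  hence e: "e \<subseteq> {1..n}" "card e = 2" "v \<in> e" by (auto simp: all_edges_def)
  then obtain a b where ab: "e = {a, b}" "a \<noteq> b" by (auto simp: card_2_iff)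
  show "e \<in> (\<lambda>i. {v, i}) ` ({1..n} - {v})"
  proof (cases "v = a")
    case True
    hence "e = {v, b}" using ab by simp
    moreover have "b \<in> {1..n} - {v}" using e(1) ab True by auto
    ultimately show ?thesis by blast
  next
    case False
    hence "v = b" using e(3) ab by auto
    hence "e = {v, a}" using ab by auto
    moreover have "a \<in> {1..n} - {v}" using e(1) ab \<open>v = b\<close> by auto
    ultimately show ?thesis by blast
  qed
qed

lemma card_star': assumes "v \<in> {1..n}" shows "card {e \<in> all_edges n. v \<in> e} \<le> n - 1"
proof -
  have "card {e \<in> all_edges n. v \<in> e} \<le> card ((\<lambda>i. {v, i}) ` ({1..n} - {v}))"
    by (rule card_mono[OF _ star_sub']) simp
  also have "\<dots> \<le> card ({1..n} - {v})" by (rule card_image_le) simp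
  also have "\<dots> = n - 1" using assms by simp
  finally show ?thesis .
qed

definition QQ :: "nat \<Rightarrow> nat set set" where "QQ n = {e \<in> all_edges n. 2 \<in> e}"
definition PP :: "nat set set" where "PP = {e. 1 \<in> e}"

lemma QQ_sub: "QQ n \<subseteq> all_edges n" unfolding QQ_def by auto

lemma card_QQ: "card (QQ n) \<le> n" unfolding QQ_def by (rule card_star)

lemma card_WP: "card ((all_edges n - QQ n) \<inter> PP) \<le> n"
proof -
  have "card ((all_edges n - QQ n) \<inter> PP) \<le> card {e \<in> all_edges n. 1 \<in> e}"
    by (rule card_mono) (auto simp: finite_all_edges PP_def)
  thus ?thesis using card_star[of n 1] by simp
qed

lemma QP_le1: assumes "A \<subseteq> QQ n" shows "card (A \<inter> PP) \<le> 1"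
proof -
  have "A \<inter> PP \<subseteq> {{1, 2}}"
  proof
    fix e assume "e \<in> A \<inter> PP"
    hence e: "card e = 2" "1 \<in> e" "2 \<in> e" using assms by (auto simp: QQ_def all_edges_def PP_def)
    then obtain a b where ab: "e = {a, b}" "a \<noteq> b" by (auto simp: card_2_iff)
    have "e = {1, 2}" using e ab by auto
    thus "e \<in> {{1, 2}}" by simp
  qed
  hence "card (A \<inter> PP) \<le> card {{1 :: nat, 2}}" by (rule card_mono[rotated]) simp
  thus ?thesis by simp
qed

lemma deg1: "deg E 1 = card (E \<inter> PP)"
  unfolding deg_def PP_def by (rule arg_cong[where f = card]) auto

lemma deg2: "E \<subseteq> all_edges n \<Longrightarrow> deg E 2 = card (E \<inter> QQ n)"
  unfolding deg_def QQ_def by (rule arg_cong[where f = card]) auto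

lemma class_eq: "{E \<in> graphs_nm n m. deg E 2 = k} = gk (all_edges n) (QQ n) m k"
  unfolding gk_def graphs_nm_def using deg2 by auto

lemma graphs_Int: "graphs_nm n m \<inter> {E. deg E 2 = k} = gk (all_edges n) (QQ n) m k"
  using class_eq[of n m k] by auto

lemma deg2_le: "E \<in> graphs_nm n m \<Longrightarrow> deg E 2 \<le> n"
proof -
  assume "E \<in> graphs_nm n m"
  hence E: "E \<subseteq> all_edges n" by (simp add: graphs_nm_def)
  have "card (E \<inter> QQ n) \<le> card (QQ n)" by (rule card_mono) (auto simp: QQ_def finite_all_edges)
  thus ?thesis using deg2[OF E] card_QQ[of n] by simp
qed

lemma deg2_le': "2 \<le> n \<Longrightarrow> E \<in> graphs_nm n m \<Longrightarrow> deg E 2 \<le> n - 1"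
proof -
  assume n: "2 \<le> n" and "E \<in> graphs_nm n m"
  hence E: "E \<subseteq> all_edges n" by (simp add: graphs_nm_def)
  have "card (E \<inter> QQ n) \<le> card (QQ n)" by (rule card_mono) (auto simp: QQ_def finite_all_edges)
  moreover have "card (QQ n) \<le> n - 1" unfolding QQ_def using n by (intro card_star') simp
  ultimately show ?thesis using deg2[OF E] by simp
qed

lemma finite_graphs: "finite (graphs_nm n m)"
  unfolding graphs_nm_def by (rule finite_subset[of _ "Pow (all_edges n)"]) (auto simp: finite_all_edges)

lemma real_NN: "2 * real (NN n) = real n * (real n - 1)"
proof (cases n)
  case 0 thus ?thesis by (simp add: NN_def)
next
  case (Suc k)
  have "2 * (n choose 2) = n * (n - 1)"
    unfolding choose_two by (simp add: Suc)
  hence "2 * real (n choose 2) = real n * real (n - 1)" by (metis of_nat_mult of_nat_numeral)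
  thus ?thesis using Suc by (simp add: NN_def)
qed

lemma phi_bounds:
  assumes "finite Q" "x > 0" "\<And>A. A \<subseteq> Q \<Longrightarrow> card (A \<inter> P) \<le> 1"
  shows "min 1 x * ssum 1 Q P k \<le> ssum x Q P k \<and> ssum x Q P k \<le> max 1 x * ssum 1 Q P k"
proof -
  have t: "min 1 x \<le> x ^ card (A \<inter> P) \<and> x ^ card (A \<inter> P) \<le> max 1 x" if "A \<in> subs Q k" for A
  proof -
    have "card (A \<inter> P) \<le> 1" using that assms(3) by (auto simp: subs_def)
    hence "card (A \<inter> P) = 0 \<or> card (A \<inter> P) = 1" by auto
    thus ?thesis by auto
  qed
  have "min 1 x * ssum 1 Q P k = (\<Sum>A\<in>subs Q k. min 1 x)" by (simp add: ssum_one)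
  also have "\<dots> \<le> ssum x Q P k" unfolding ssum_def by (rule sum_mono) (use t in auto)
  finally have 1: "min 1 x * ssum 1 Q P k \<le> ssum x Q P k" .
  have "ssum x Q P k \<le> (\<Sum>A\<in>subs Q k. max 1 x)" unfolding ssum_def by (rule sum_mono) (use t in auto)
  also have "\<dots> = max 1 x * ssum 1 Q P k" by (simp add: ssum_one)
  finally show ?thesis using 1 by simp
qed

definition gg :: "nat \<Rightarrow> nat \<Rightarrow> real \<Rightarrow> nat \<Rightarrow> real" where
  "gg n m x k = (\<Sum>E\<in>gk (all_edges n) (QQ n) m k. x ^ card (E \<inter> PP)) / real (card (gk (all_edges n) (QQ n) m k))"

lemma gg_factor:
  assumes ne: "gk (all_edges n) (QQ n) m k \<noteq> {}" and x: "x > 0"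
  shows "gg n m x k = (ssum x (QQ n) PP k / ssum 1 (QQ n) PP k) * havg x (all_edges n - QQ n) PP (m - k)"
    and "k \<le> m" "k \<le> n" "subs (QQ n) k \<noteq> {}" "subs (all_edges n - QQ n) (m - k) \<noteq> {}"
    and "ssum 1 (QQ n) PP k > 0" "ssum 1 (all_edges n - QQ n) PP (m - k) > 0"
proof -
  obtain E where E: "E \<subseteq> all_edges n" "card E = m" "card (E \<inter> QQ n) = k" using ne by (auto simp: gk_def)
  have fE: "finite E" using E(1) finite_all_edges by (rule finite_subset)
  show km: "k \<le> m" using card_mono[OF fE Int_lower1, of "QQ n"] E by simp
  have fQ: "finite (QQ n)" using finite_all_edges QQ_sub by (rule rev_finite_subset)
  have "card (E \<inter> QQ n) \<le> card (QQ n)" by (rule card_mono[OF fQ]) simp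
  thus "k \<le> n" using E card_QQ[of n] by simp
  have "E \<inter> QQ n \<in> subs (QQ n) k" unfolding subs_def using E(3) by simp
  thus s1: "subs (QQ n) k \<noteq> {}" by auto
  have "card (E - QQ n) = m - k" using card_Int_Diff[OF fE, of "QQ n"] E by simp
  hence "E - QQ n \<in> subs (all_edges n - QQ n) (m - k)" unfolding subs_def using E(1) by auto
  thus s2: "subs (all_edges n - QQ n) (m - k) \<noteq> {}" by auto
  have fW: "finite (all_edges n - QQ n)" using finite_all_edges by simp
  show p1: "ssum 1 (QQ n) PP k > 0" using ssum_pos[OF fQ s1] by simp
  show p2: "ssum 1 (all_edges n - QQ n) PP (m - k) > 0" using ssum_pos[OF fW s2] by simp
  have num: "(\<Sum>E\<in>gk (all_edges n) (QQ n) m k. x ^ card (E \<inter> PP)) = ssum x (QQ n) PP k * ssum x (all_edges n - QQ n) PP (m - k)"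
    by (rule decomp[OF finite_all_edges QQ_sub km])
  have den: "real (card (gk (all_edges n) (QQ n) m k)) = ssum 1 (QQ n) PP k * ssum 1 (all_edges n - QQ n) PP (m - k)"
    using decomp[OF finite_all_edges QQ_sub km, of 1 PP] by simp
  show "gg n m x k = (ssum x (QQ n) PP k / ssum 1 (QQ n) PP k) * havg x (all_edges n - QQ n) PP (m - k)"
    unfolding gg_def num den havg_def by simp
qed

lemma max_min_exp: "max 1 (exp (l::real)) / min 1 (exp l) = exp \<bar>l\<bar>"
proof (cases "l \<ge> 0")
  case True
  hence "1 \<le> exp l" by (simp add: one_le_exp_iff)
  thus ?thesis using True by (simp add: min_def max_def)
next
  case False
  hence "exp l \<le> 1" by (simp add: exp_le_one_iff)
  hence "max 1 (exp l) / min 1 (exp l) = 1 / exp l" by (simp add: min_def max_def)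
  also have "\<dots> = exp (- l)" by (simp add: exp_minus field_simps)
  finally show ?thesis using False by simp
qed

lemma main_ratio:
  fixes l z :: real
  defines "x \<equiv> exp l"
  assumes Npos: "real (NN n) - real n - real m > 0"
    and zz: "real n * (\<bar>x - 1\<bar> * real n / (real (NN n) - real n - real m)) \<le> z" "z < 1"
    and ne1: "gk (all_edges n) (QQ n) m k \<noteq> {}" and ne2: "gk (all_edges n) (QQ n) m k' \<noteq> {}"
  shows "gg n m x k \<le> exp \<bar>l\<bar> * (exp z / (1 - z)) * gg n m x k'"
proof -
  have x0: "x > 0" unfolding x_def by simp
  define W where "W = all_edges n - QQ n"
  define h where "h = havg x W PP"
  define eta where "eta = \<bar>x - 1\<bar> * real n / (real (NN n) - real n - real m)"
  have fW: "finite W" unfolding W_def using finite_all_edges by simp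
  have fQ: "finite (QQ n)" using finite_all_edges QQ_sub by (rule rev_finite_subset)
  have cW: "real (card W) \<ge> real (NN n) - real n"
  proof -
    have "card W = card (all_edges n) - card (QQ n)" unfolding W_def
      using QQ_sub fQ by (intro card_Diff_subset)
    moreover have "card (QQ n) \<le> card (all_edges n)" using QQ_sub finite_all_edges by (intro card_mono)
    ultimately show ?thesis using card_all_edges[of n] card_QQ[of n] by linarith
  qed
  have eta0: "eta \<ge> 0" unfolding eta_def using Npos by simp
  have step: "\<bar>h (Suc i) - h i\<bar> \<le> eta * h i" if "i < m" for i
  proof -
    have icW: "i < card W" using cW Npos that by linarith
    have "\<bar>h (Suc i) - h i\<bar> \<le> \<bar>x - 1\<bar> * real (card (W \<inter> PP)) / real (card W - i) * h i"
      unfolding h_def by (rule havg_step[OF fW x0 icW])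
    also have "\<dots> \<le> eta * h i"
    proof (rule mult_right_mono)
      show "0 \<le> h i" unfolding h_def havg_def using x0 by (intro divide_nonneg_nonneg ssum_nonneg) auto
      have K: "real (card (W \<inter> PP)) \<le> real n" using card_WP[of n] unfolding W_def by simp
      have D: "real (NN n) - real n - real m \<le> real (card W - i)" using icW cW that by (simp add: of_nat_diff)
      show "\<bar>x - 1\<bar> * real (card (W \<inter> PP)) / real (card W - i) \<le> eta"
        unfolding eta_def using K D Npos
        by (intro frac_le mult_left_mono) auto
    qed
    finally show ?thesis .
  qed
  note f1 = gg_factor[OF ne1 x0] and f2 = gg_factor[OF ne2 x0]
  have hh: "h (m - k) \<le> exp z / (1 - z) * h (m - k')"
  proof (rule ratio_bound[where J = m and eta = eta and n = n])
    show "\<And>i. i < m \<Longrightarrow> \<bar>h (Suc i) - h i\<bar> \<le> eta * h i" by (rule step)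
    show "\<And>i. 0 \<le> h i" unfolding h_def havg_def using x0 by (intro divide_nonneg_nonneg ssum_nonneg) auto
    show "0 \<le> eta" by (rule eta0)
    show "m - k \<le> m" "m - k' \<le> m" by auto
    show "m - k \<le> m - k' + n" "m - k' \<le> m - k + n" using f1(2,3) f2(2,3) by auto
    show "real n * eta \<le> z" using zz(1) unfolding eta_def .
    show "z < 1" by (rule zz(2))
  qed
  have le1: "\<And>A. A \<subseteq> QQ n \<Longrightarrow> card (A \<inter> PP) \<le> 1" by (rule QP_le1)
  have pb1: "ssum x (QQ n) PP k \<le> max 1 x * ssum 1 (QQ n) PP k"
    using phi_bounds[OF fQ x0 le1, of k] by blast
  have pb2: "min 1 x * ssum 1 (QQ n) PP k' \<le> ssum x (QQ n) PP k'"
    using phi_bounds[OF fQ x0 le1, of k'] by blast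
  have phi1: "ssum x (QQ n) PP k / ssum 1 (QQ n) PP k \<le> max 1 x"
    using pb1 f1(6) by (simp add: divide_le_eq)
  have phi2: "min 1 x \<le> ssum x (QQ n) PP k' / ssum 1 (QQ n) PP k'"
    using pb2 f2(6) by (simp add: le_divide_eq)
  have h0: "\<And>i. h i \<ge> 0" unfolding h_def havg_def using x0 by (intro divide_nonneg_nonneg ssum_nonneg) auto
  have mn0: "min 1 x > 0" using x0 by simp
  have R0: "exp z / (1 - z) \<ge> 0" using zz by simp
  have g1: "gg n m x k = (ssum x (QQ n) PP k / ssum 1 (QQ n) PP k) * h (m - k)"
    unfolding f1(1) h_def W_def ..
  have g2: "gg n m x k' = (ssum x (QQ n) PP k' / ssum 1 (QQ n) PP k') * h (m - k')"
    unfolding f2(1) h_def W_def ..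
  have "gg n m x k \<le> max 1 x * h (m - k)" unfolding g1 using phi1 h0 by (intro mult_right_mono) auto
  also have "\<dots> \<le> max 1 x * (exp z / (1 - z) * h (m - k'))" using hh by (intro mult_left_mono) auto
  also have "\<dots> = (max 1 x / min 1 x) * (exp z / (1 - z)) * (min 1 x * h (m - k'))" using mn0 by simp
  also have "\<dots> \<le> (max 1 x / min 1 x) * (exp z / (1 - z)) * gg n m x k'"
    unfolding g2 using phi2 h0 R0 mn0 zz(2) by (intro mult_left_mono mult_right_mono mult_nonneg_nonneg divide_nonneg_nonneg) auto
  finally show ?thesis unfolding x_def max_min_exp .
qed

lemma cond_pmf_of_set:
  assumes fin: "finite G" and ne: "G \<inter> A \<noteq> {}"
  shows "cond_pmf (pmf_of_set G) A = pmf_of_set (G \<inter> A)"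
proof (rule pmf_eqI)
  fix E
  have G: "G \<noteq> {}" using ne by auto
  have sp: "set_pmf (pmf_of_set G) \<inter> A \<noteq> {}" using G fin ne by simp
  have cGA: "card (G \<inter> A) > 0" using ne fin by (simp add: card_gt_0_iff)
  have "pmf (cond_pmf (pmf_of_set G) A) E = (if E \<in> A then pmf (pmf_of_set G) E / measure (pmf_of_set G) A else 0)"
    by (rule pmf_cond[OF sp])
  also have "\<dots> = indicator (G \<inter> A) E / real (card (G \<inter> A))"
    using G fin cGA by (simp add: measure_pmf_of_set indicator_def)
  also have "\<dots> = pmf (pmf_of_set (G \<inter> A)) E" using ne fin by simp
  finally show "pmf (cond_pmf (pmf_of_set G) A) E = pmf (pmf_of_set (G \<inter> A)) E" .
qed

lemma finite_gk: "finite (gk (all_edges n) (QQ n) m k)"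
  unfolding gk_def by (rule finite_subset[of _ "Pow (all_edges n)"]) (auto simp: finite_all_edges)

lemma gk_sum: "(\<Sum>E\<in>gk (all_edges n) (QQ n) m k. x ^ card (E \<inter> PP)) = gg n m x k * real (card (gk (all_edges n) (QQ n) m k))"
proof (cases "gk (all_edges n) (QQ n) m k = {}")
  case True thus ?thesis by simp
next
  case False
  hence "card (gk (all_edges n) (QQ n) m k) > 0" using finite_gk by (simp add: card_gt_0_iff)
  thus ?thesis unfolding gg_def by simp
qed

lemma group_graphs:
  fixes w :: "nat set set \<Rightarrow> real"
  shows "(\<Sum>E\<in>graphs_nm n m. w E) = (\<Sum>k'\<in>{0..n}. \<Sum>E\<in>gk (all_edges n) (QQ n) m k'. w E)"
proof -
  have "(\<Sum>k'\<in>{0..n}. \<Sum>E\<in>{E. E \<in> graphs_nm n m \<and> deg E 2 = k'}. w E) = (\<Sum>E\<in>graphs_nm n m. w E)"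
    by (rule sum.group) (auto simp: finite_graphs deg2_le)
  moreover have "\<And>k'. {E. E \<in> graphs_nm n m \<and> deg E 2 = k'} = gk (all_edges n) (QQ n) m k'"
    using class_eq by simp
  ultimately show ?thesis by simp
qed

lemma avg_bounds:
  fixes x B :: real
  assumes x: "x > 0" and B: "B > 0"
    and ratio: "\<And>k'. gk (all_edges n) (QQ n) m k' \<noteq> {} \<Longrightarrow> gg n m x k' \<le> B * gg n m x k \<and> gg n m x k \<le> B * gg n m x k'"
  shows "(\<Sum>E\<in>graphs_nm n m. x ^ card (E \<inter> PP)) \<le> B * gg n m x k * real (card (graphs_nm n m))"
    and "gg n m x k * real (card (graphs_nm n m)) \<le> B * (\<Sum>E\<in>graphs_nm n m. x ^ card (E \<inter> PP))"
proof -
  let ?c = "\<lambda>k'. real (card (gk (all_edges n) (QQ n) m k'))"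
  have cardG: "real (card (graphs_nm n m)) = (\<Sum>k'\<in>{0..n}. ?c k')"
    using group_graphs[where w = "\<lambda>_. 1" and n = n and m = m] by simp
  have sumG: "(\<Sum>E\<in>graphs_nm n m. x ^ card (E \<inter> PP)) = (\<Sum>k'\<in>{0..n}. gg n m x k' * ?c k')"
    unfolding group_graphs gk_sum ..
  have "(\<Sum>k'\<in>{0..n}. gg n m x k' * ?c k') \<le> (\<Sum>k'\<in>{0..n}. B * gg n m x k * ?c k')"
  proof (rule sum_mono)
    fix k' show "gg n m x k' * ?c k' \<le> B * gg n m x k * ?c k'"
    proof (cases "gk (all_edges n) (QQ n) m k' = {}")
      case True thus ?thesis by simp
    next
      case False thus ?thesis using ratio[OF False] by (intro mult_right_mono) auto
    qed
  qed
  thus "(\<Sum>E\<in>graphs_nm n m. x ^ card (E \<inter> PP)) \<le> B * gg n m x k * real (card (graphs_nm n m))"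
    unfolding sumG cardG by (simp add: sum_distrib_left)
  have "(\<Sum>k'\<in>{0..n}. gg n m x k * ?c k') \<le> (\<Sum>k'\<in>{0..n}. B * (gg n m x k' * ?c k'))"
  proof (rule sum_mono)
    fix k' show "gg n m x k * ?c k' \<le> B * (gg n m x k' * ?c k')"
    proof (cases "gk (all_edges n) (QQ n) m k' = {}")
      case True thus ?thesis by simp
    next
      case False thus ?thesis using ratio[OF False] by (simp add: mult.assoc[symmetric] mult_right_mono)
    qed
  qed
  thus "gg n m x k * real (card (graphs_nm n m)) \<le> B * (\<Sum>E\<in>graphs_nm n m. x ^ card (E \<inter> PP))"
    unfolding sumG cardG by (simp add: sum_distrib_left)
qed

lemma gg_pos: "gk (all_edges n) (QQ n) m k \<noteq> {} \<Longrightarrow> x > 0 \<Longrightarrow> gg n m x k > 0"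
  unfolding gg_def using finite_gk by (intro divide_pos_pos sum_pos) (auto simp: card_gt_0_iff)

lemma abs_ratio:
  fixes a b B :: real
  assumes "a > 0" "b > 0" "B > 0" "b \<le> B * a" "a \<le> B * b"
  shows "\<bar>a / b - 1\<bar> \<le> B - 1"
proof -
  have u: "a / b \<le> B" using assms by (simp add: divide_le_eq)
  have l: "1 / B \<le> a / b" using assms by (simp add: field_simps)
  have "(B - 1)^2 \<ge> 0" by simp
  hence "2 - B \<le> 1 / B" using assms(3) by (simp add: field_simps power2_eq_square)
  thus ?thesis using u l by (simp add: abs_le_iff)
qed

lemma per_n:
  fixes l z :: real and n m k :: nat
  assumes Npos: "real (NN n) - real n - real m > 0"
    and zz: "real n * (\<bar>exp l - 1\<bar> * real n / (real (NN n) - real n - real m)) \<le> z" "z < 1"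
    and G: "graphs_nm n m \<noteq> {}"
    and pk: "measure_pmf.prob (Gnm n m) {E. deg E 2 = k} > 0"
  shows "\<bar>measure_pmf.expectation (cond_pmf (Gnm n m) {E. deg E 2 = k})
                 (\<lambda>E. exp (l * (real (deg E 1) - 2 * real m / real n)))
             / measure_pmf.expectation (Gnm n m)
                 (\<lambda>E. exp (l * (real (deg E 1) - 2 * real m / real n))) - 1\<bar>
         \<le> exp \<bar>l\<bar> * (exp z / (1 - z)) - 1"
proof -
  define x where "x = exp l"
  define c where "c = exp (- (l * (2 * real m / real n)))"
  define B where "B = exp \<bar>l\<bar> * (exp z / (1 - z))"
  have x0: "x > 0" and c0: "c > 0" unfolding x_def c_def by auto
  have z0: "0 \<le> z" using zz Npos by (smt (verit) mult_nonneg_nonneg divide_nonneg_nonneg abs_ge_zero of_nat_0_le_iff)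
  have B1: "B \<ge> 1"
  proof -
    have "1 \<le> exp \<bar>l\<bar>" by simp
    moreover have "1 \<le> exp z / (1 - z)" using z0 zz(2) by (simp add: le_divide_eq) (smt (verit) exp_ge_add_one_self)
    ultimately show ?thesis unfolding B_def by (metis mult_mono' mult.right_neutral zero_le_one order_trans)
  qed
  have f: "\<And>E. exp (l * (real (deg E 1) - 2 * real m / real n)) = c * x ^ card (E \<inter> PP)"
    unfolding c_def x_def deg1 by (simp add: right_diff_distrib exp_diff exp_minus exp_of_nat_mult[symmetric] field_simps mult.commute)
  have fin: "finite (graphs_nm n m)" by (rule finite_graphs)
  have GA: "graphs_nm n m \<inter> {E. deg E 2 = k} \<noteq> {}"
    using pk G fin by (auto simp: Gnm_def measure_pmf_of_set)
  hence ne: "gk (all_edges n) (QQ n) m k \<noteq> {}" using graphs_Int by simp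
  have e1: "measure_pmf.expectation (cond_pmf (Gnm n m) {E. deg E 2 = k})
                 (\<lambda>E. exp (l * (real (deg E 1) - 2 * real m / real n))) = c * gg n m x k"
    unfolding Gnm_def cond_pmf_of_set[OF fin GA] graphs_Int f
    using ne finite_gk by (simp add: integral_pmf_of_set gg_def sum_distrib_left)
  have e0: "measure_pmf.expectation (Gnm n m)
                 (\<lambda>E. exp (l * (real (deg E 1) - 2 * real m / real n))) =
            c * ((\<Sum>E\<in>graphs_nm n m. x ^ card (E \<inter> PP)) / real (card (graphs_nm n m)))"
    unfolding Gnm_def f using G fin by (simp add: integral_pmf_of_set sum_distrib_left)
  have ratio: "gg n m x k' \<le> B * gg n m x k \<and> gg n m x k \<le> B * gg n m x k'"
    if "gk (all_edges n) (QQ n) m k' \<noteq> {}" for k'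
    unfolding B_def x_def using main_ratio[OF Npos zz ne that] main_ratio[OF Npos zz that ne] by simp
  have B0: "B > 0" using B1 by simp
  note ab = avg_bounds[OF x0 B0 ratio]
  have cG: "real (card (graphs_nm n m)) > 0" using G fin by (simp add: card_gt_0_iff)
  have gp: "gg n m x k > 0" by (rule gg_pos[OF ne x0])
  define av where "av = (\<Sum>E\<in>graphs_nm n m. x ^ card (E \<inter> PP)) / real (card (graphs_nm n m))"
  have av1: "av \<le> B * gg n m x k" using ab(1) B1 cG unfolding av_def by (simp add: divide_le_eq)
  have av2: "gg n m x k \<le> B * av" using ab(2) B1 cG unfolding av_def by (simp add: le_divide_eq mult.commute)
  have "0 < B * av" using av2 gp by linarith
  hence avp: "av > 0" using B0 by (simp add: zero_less_mult_iff)
  have "\<bar>gg n m x k / av - 1\<bar> \<le> B - 1" using gp avp B1 av1 av2 by (intro abs_ratio) auto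
  moreover have "c * gg n m x k / (c * av) = gg n m x k / av" using c0 by simp
  ultimately show ?thesis unfolding e1 e0 av_def[symmetric] B_def by simp
qed

lemma arith_n:
  fixes r N mm d y :: real
  assumes d: "0 < d" "d < 1" and NN: "2 * N = r * (r - 1)" and mm: "mm \<le> (1 - d) * N" "0 \<le> mm"
    and r: "2 + 4 / d \<le> r" and y: "0 \<le> y"
  shows "N - r - mm > 0" "r * (y * r / (N - r - mm)) \<le> 4 / d * y"
proof -
  have dr: "d * r \<ge> 2 * d + 4"
  proof -
    have "d * (2 + 4 / d) \<le> d * r" using r d by (intro mult_left_mono) auto
    thus ?thesis using d by (simp add: algebra_simps)
  qed
  have "4 / d > 0" using d by simp
  hence r0: "r \<ge> 2" using r by linarith
  have "(2 * d + 4) * r \<le> (d * r) * r" using dr r0 by (intro mult_right_mono) auto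
  hence drr: "2 * (d * r) + 4 * r \<le> (d * r) * r" by (simp add: algebra_simps)
  have "d * (2 * N) = d * (r * (r - 1))" using NN by simp
  hence dN: "2 * (d * N) = (d * r) * r - d * r" by (simp add: algebra_simps)
  have mm': "mm \<le> N - d * N" using mm by (simp add: algebra_simps)
  have dNr: "2 * (d * N) \<ge> d * r + 4 * r" using drr dN by linarith
  have "d * r > 0" using d r0 by simp
  hence "d * N - r > 0" using dNr r0 by linarith
  thus pos: "N - r - mm > 0" using mm' by linarith
  have key: "d * (r * r) \<le> 4 * (N - r - mm)"
  proof -
    define X where "X = d * r * r"
    define Y where "Y = d * r"
    define Z where "Z = d * N"
    have e: "d * (r * r) = X" unfolding X_def by simp
    have 1: "2 * Y + 4 * r \<le> X" using drr unfolding X_def Y_def by simp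
    have 2: "2 * Z = X - Y" using dN unfolding X_def Y_def Z_def by simp
    have 3: "mm \<le> N - Z" using mm' unfolding Z_def by simp
    show ?thesis unfolding e using 1 2 3 by (smt (verit))
  qed
  have "r * r / (N - r - mm) \<le> 4 / d" using key pos d by (simp add: divide_le_eq le_divide_eq mult.commute)
  hence "y * (r * r / (N - r - mm)) \<le> y * (4 / d)" using y by (intro mult_left_mono) auto
  thus "r * (y * r / (N - r - mm)) \<le> 4 / d * y" by (simp add: mult.commute mult.left_commute)
qed


lemma good_n:
  fixes \<delta> l :: real and n m :: nat
  assumes d: "0 < \<delta>" "\<delta> < 1" and mcond: "1 \<le> m" "real m \<le> (1 - \<delta>) * real (NN n)"
    and nbig: "2 + 4 / \<delta> \<le> real n" and zh: "4 / \<delta> * \<bar>exp l - 1\<bar> < 1"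
  defines "S \<equiv> {k. k \<le> n - 1 \<and> measure_pmf.prob (Gnm n m) {E. deg E 2 = k} > 0}"
  defines "F \<equiv> (\<lambda>k. \<bar>measure_pmf.expectation (cond_pmf (Gnm n m) {E. deg E 2 = k})
                 (\<lambda>E. exp (l * (real (deg E 1) - 2 * real m / real n)))
             / measure_pmf.expectation (Gnm n m)
                 (\<lambda>E. exp (l * (real (deg E 1) - 2 * real m / real n))) - 1\<bar>)"
  shows "0 \<le> (SUP k \<in> S. F k) \<and> (SUP k \<in> S. F k) \<le> exp \<bar>l\<bar> * (exp (4 / \<delta> * \<bar>exp l - 1\<bar>) / (1 - 4 / \<delta> * \<bar>exp l - 1\<bar>)) - 1"
proof -
  define z where "z = 4 / \<delta> * \<bar>exp l - 1\<bar>"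
  have mm0: "0 \<le> real m" by simp
  have y0: "0 \<le> \<bar>exp l - 1\<bar>" by simp
  note ar = arith_n[OF d real_NN[of n] mcond(2) mm0 nbig y0]
  have Npos: "real (NN n) - real n - real m > 0" using ar by simp
  have zz: "real n * (\<bar>exp l - 1\<bar> * real n / (real (NN n) - real n - real m)) \<le> z"
    using ar unfolding z_def by simp
  have n2: "2 \<le> n"
  proof -
    have "4 / \<delta> > 0" using d by simp
    thus ?thesis using nbig by linarith
  qed
  have "m \<le> NN n"
  proof -
    have "(1 - \<delta>) * real (NN n) \<le> 1 * real (NN n)" using d by (intro mult_right_mono) auto
    thus ?thesis using mcond(2) by linarith
  qed
  then obtain E0 where E0: "E0 \<subseteq> all_edges n" "card E0 = m"
    using obtain_subset_with_card_n[of m "all_edges n"] card_all_edges[of n] by auto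
  have E0G: "E0 \<in> graphs_nm n m" using E0 by (simp add: graphs_nm_def)
  hence G: "graphs_nm n m \<noteq> {}" by auto
  have fin: "finite (graphs_nm n m)" by (rule finite_graphs)
  have k0: "deg E0 2 \<in> S"
  proof -
    have "E0 \<in> set_pmf (Gnm n m)" using E0G G fin by (simp add: Gnm_def)
    hence "measure_pmf.prob (Gnm n m) {E. deg E 2 = deg E0 2} > 0" by (intro measure_pmf_posI) auto
    moreover have "deg E0 2 \<le> n - 1" using deg2_le'[OF n2 E0G] .
    ultimately show ?thesis unfolding S_def by simp
  qed
  hence Sne: "S \<noteq> {}" by auto
  have bound: "F k \<le> exp \<bar>l\<bar> * (exp z / (1 - z)) - 1" if "k \<in> S" for k
    unfolding F_def by (rule per_n[OF Npos zz _ G]) (use that zh in \<open>auto simp: S_def z_def\<close>)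
  have finS: "finite S" unfolding S_def by (rule finite_subset[of _ "{..n - 1}"]) auto
  have "(SUP k \<in> S. F k) \<le> exp \<bar>l\<bar> * (exp z / (1 - z)) - 1" by (rule cSUP_least[OF Sne bound])
  moreover have "0 \<le> (SUP k \<in> S. F k)"
    by (rule cSUP_upper2[OF bdd_above_finite k0]) (use finS in \<open>auto simp: F_def\<close>)
  ultimately show ?thesis unfolding z_def by simp
qed

theorem mainTheorem16:
  fixes \<delta> :: real and m :: "nat \<Rightarrow> nat" and lam :: "nat \<Rightarrow> real"
  assumes "0 < \<delta>" and "\<delta> < 1"
    and "eventually (\<lambda>n. 1 \<le> m n \<and> real (m n) \<le> (1 - \<delta>) * real (NN n)) sequentially"
    and "lam \<longlonglongrightarrow> 0"
  shows "(\<lambda>n. SUP k \<in> {k. k \<le> n - 1 \<and> measure_pmf.prob (Gnm n (m n)) {E. deg E 2 = k} > 0}.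
            \<bar>measure_pmf.expectation (cond_pmf (Gnm n (m n)) {E. deg E 2 = k})
                 (\<lambda>E. exp (lam n * (real (deg E 1) - 2 * real (m n) / real n)))
             / measure_pmf.expectation (Gnm n (m n))
                 (\<lambda>E. exp (lam n * (real (deg E 1) - 2 * real (m n) / real n))) - 1\<bar>)
         \<longlonglongrightarrow> 0"
proof -
  define zh where "zh n = 4 / \<delta> * \<bar>exp (lam n) - 1\<bar>" for n
  have zh_lim: "zh \<longlonglongrightarrow> 0"
  proof -
    have "(\<lambda>n. 4 / \<delta> * \<bar>exp (lam n) - 1\<bar>) \<longlonglongrightarrow> 4 / \<delta> * \<bar>exp 0 - 1\<bar>"
      by (intro tendsto_intros assms(4))
    thus ?thesis unfolding zh_def by simp
  qed
  have B_lim: "(\<lambda>n. exp \<bar>lam n\<bar> * (exp (zh n) / (1 - zh n)) - 1) \<longlonglongrightarrow> 0"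
  proof -
    have "(\<lambda>n. exp \<bar>lam n\<bar> * (exp (zh n) / (1 - zh n)) - 1) \<longlonglongrightarrow> exp \<bar>0\<bar> * (exp 0 / (1 - 0)) - 1"
      by (intro tendsto_intros assms(4) zh_lim) simp
    thus ?thesis by simp
  qed
  have ev_n: "eventually (\<lambda>n. 2 + 4 / \<delta> \<le> real n) sequentially"
  proof -
    obtain K :: nat where "2 + 4 / \<delta> \<le> real K" using real_arch_simple by blast
    thus ?thesis unfolding eventually_sequentially by (intro exI[of _ K]) auto
  qed
  have ev_z: "eventually (\<lambda>n. zh n < 1) sequentially" using order_tendstoD(2)[OF zh_lim, of 1] by simp
  have ev: "eventually (\<lambda>n. 0 \<le> (SUP k \<in> {k. k \<le> n - 1 \<and> measure_pmf.prob (Gnm n (m n)) {E. deg E 2 = k} > 0}.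
            \<bar>measure_pmf.expectation (cond_pmf (Gnm n (m n)) {E. deg E 2 = k})
                 (\<lambda>E. exp (lam n * (real (deg E 1) - 2 * real (m n) / real n)))
             / measure_pmf.expectation (Gnm n (m n))
                 (\<lambda>E. exp (lam n * (real (deg E 1) - 2 * real (m n) / real n))) - 1\<bar>)
         \<and> (SUP k \<in> {k. k \<le> n - 1 \<and> measure_pmf.prob (Gnm n (m n)) {E. deg E 2 = k} > 0}.
            \<bar>measure_pmf.expectation (cond_pmf (Gnm n (m n)) {E. deg E 2 = k})
                 (\<lambda>E. exp (lam n * (real (deg E 1) - 2 * real (m n) / real n)))
             / measure_pmf.expectation (Gnm n (m n))
                 (\<lambda>E. exp (lam n * (real (deg E 1) - 2 * real (m n) / real n))) - 1\<bar>)
           \<le> exp \<bar>lam n\<bar> * (exp (zh n) / (1 - zh n)) - 1) sequentially"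
    using assms(3) ev_n ev_z
  proof eventually_elim
    case (elim n)
    show ?case unfolding zh_def
      by (rule good_n[OF assms(1,2)]) (use elim in \<open>auto simp: zh_def\<close>)
  qed
  show ?thesis
    by (rule tendsto_sandwich[OF eventually_mono[OF ev] eventually_mono[OF ev] tendsto_const B_lim]) auto
qed

end
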